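(* Let $N\geq1$, $\lambda>0$, and $\alpha_1,\ldots,\alpha_N\geq0$. Consider the problem $\max_{p\in\Delta_N}\ell(p):=\sum_{i=1}^N\frac{p_i}{1+2\lambda p_i}\alpha_i$. Let $(\ell_1,\ldots,\ell_N)$ be a permutation of $\{1,\ldots,N\}$ such that $\alpha_{\ell_1}\leq\cdots\leq\alpha_{\ell_N}$, with $\alpha_{\ell_N}>0$, and let $A_i=\{\ell_1,\ldots,\ell_i\}$ for $i\in\{1,\ldots,N\}$, $A_0=\emptyset$. Define $k=\min\left\{i\in\{0,\ldots,N-1\}:(N-i+2\lambda)\sqrt{\alpha_{\ell_{i+1}}}>\sum_{j\notin A_i}\sqrt{\alpha_j}\right\}$. Then $\overline{p}\in\mathbb{R}^N$ defined by $\overline{p}_i=0$ if $i\in A_k$ and $\overline{p}_i=\frac{1}{2\lambda}\left[\frac{(N-k+2\lambda)\sqrt{\alpha_i}}{\sum_{j\notin A_k}\sqrt{\alpha_j}}-1\right]$ if $i\notin A_k$, is the solution of this problem.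
   Context: $\Delta_N=\{p\in\mathbb{R}_+^N:\sum_{i=1}^Np_i=1\}$. *)

theory Defs
  imports Complex_Main
begin

text \<open>Probability simplex Delta_N, coordinates indexed by 1..N (values outside are irrelevant).\<close>
definition simplex :: "nat \<Rightarrow> (nat \<Rightarrow> real) set" where
  "simplex N = {p. (\<forall>i\<in>{1..N}. p i \<ge> 0) \<and> (\<Sum>i=1..N. p i) = 1}"

definition obj :: "nat \<Rightarrow> real \<Rightarrow> (nat \<Rightarrow> real) \<Rightarrow> (nat \<Rightarrow> real) \<Rightarrow> real" where
  "obj N lam \<alpha> p = (\<Sum>i=1..N. p i / (1 + 2 * lam * p i) * \<alpha> i)"

end

theory Submission imports Defs begin
lemma keyS:
  fixes lam x y a :: real
  assumes "lam > 0" "x \<ge> 0" "y \<ge> 0"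
  shows "y/(1+2*lam*y)*a + a/(1+2*lam*y)^2*(x-y) - x/(1+2*lam*x)*a
       = 2*lam*a*(x-y)^2/((1+2*lam*x)*(1+2*lam*y)^2)"
proof -
  have "1+2*lam*x > 0" "1+2*lam*y > 0" using assms by (auto intro: add_pos_nonneg)
  then show ?thesis
    apply (simp add: divide_simps)
    apply (simp add: power2_eq_square algebra_simps)
    done
qed
lemma keyA:
  fixes lam x a mu :: real
  assumes "lam > 0" "x \<ge> 0" "0 \<le> a" "a \<le> mu" "mu > 0"
  shows "0 \<le> mu*x - x/(1+2*lam*x)*a" "mu*x - x/(1+2*lam*x)*a = 0 \<Longrightarrow> x = 0"
proof -
  have p: "1+2*lam*x \<ge> 1" using assms by simp
  have q: "x/(1+2*lam*x) \<le> x"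
  proof -
    have "x * 1 \<le> x * (1+2*lam*x)" using p assms(2) by (rule mult_left_mono)
    thus ?thesis using p by (simp add: divide_le_eq)
  qed
  have "x/(1+2*lam*x)*a \<le> x*a" using q assms(3) by (rule mult_right_mono)
  also have "\<dots> \<le> mu*x" using mult_left_mono[OF assms(4) assms(2)] by (simp add: mult.commute)
  finally show "0 \<le> mu*x - x/(1+2*lam*x)*a" by simp
  assume e: "mu*x - x/(1+2*lam*x)*a = 0"
  show "x = 0"
  proof (rule ccontr)
    assume "x \<noteq> 0" hence xp: "x > 0" using assms by simp
    have "x/(1+2*lam*x)*a < mu*x"
    proof (cases "a = 0")
      case True then show ?thesis using xp assms by simp
    next
      case False
      have "1+2*lam*x > 1" using xp assms by simp
      hence "x/(1+2*lam*x) < x" using xp by (simp add: divide_less_eq)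
      hence "x/(1+2*lam*x)*a < x*a" using False assms by (intro mult_strict_right_mono) auto
      also have "\<dots> \<le> mu*x" using mult_left_mono[OF assms(4) assms(2)] by (simp add: mult.commute)
      finally show ?thesis .
    qed
    with e show False by simp
  qed
qed
theorem proposition2p3:
  fixes N :: nat and lam :: real and \<alpha> :: "nat \<Rightarrow> real" and l :: "nat \<Rightarrow> nat"
    and A :: "nat \<Rightarrow> nat set" and k :: nat and pbar :: "nat \<Rightarrow> real"
  assumes "N \<ge> 1" and "lam > 0"
    and "\<forall>i\<in>{1..N}. \<alpha> i \<ge> 0"
    and "bij_betw l {1..N} {1..N}"
    and "\<forall>i\<in>{1..N}. \<forall>j\<in>{1..N}. i \<le> j \<longrightarrow> \<alpha> (l i) \<le> \<alpha> (l j)"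
    and "\<alpha> (l N) > 0"
    and A_def: "\<And>i. A i = l ` {1..i}"
    and k_def: "k = (LEAST i. i \<in> {0..N-1} \<and>
          (real (N - i) + 2 * lam) * sqrt (\<alpha> (l (i+1))) > (\<Sum>j\<in>{1..N} - A i. sqrt (\<alpha> j)))"
    and pbar_def: "\<And>i. pbar i = (if i \<in> A k then 0 else
          1 / (2 * lam) * ((real (N - k) + 2 * lam) * sqrt (\<alpha> i) / (\<Sum>j\<in>{1..N} - A k. sqrt (\<alpha> j)) - 1))"
  shows "pbar \<in> simplex N
    \<and> (\<forall>p\<in>simplex N. obj N lam \<alpha> p \<le> obj N lam \<alpha> pbar)
    \<and> (\<forall>p\<in>simplex N. obj N lam \<alpha> p = obj N lam \<alpha> pbar \<longrightarrow> (\<forall>i\<in>{1..N}. p i = pbar i))"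
proof -
  note bij = assms(4)
  have inj: "inj_on l {1..N}" using bij by (rule bij_betw_imp_inj_on)
  have im: "l ` {1..N} = {1..N}" using bij by (rule bij_betw_imp_surj_on)
  have compl: "{1..N} - A i = l ` {i+1..N}" if "i \<le> N" for i
  proof -
    have "{1..N} - A i = l ` {1..N} - l ` {1..i}" using im A_def by simp
    also have "\<dots> = l ` ({1..N} - {1..i})"
      using inj_on_image_set_diff[OF inj] that by auto
    also have "{1..N} - {1..i} = {i+1..N}" by auto
    finally show ?thesis .
  qed
  have sumc: "(\<Sum>j\<in>{1..N} - A i. sqrt (\<alpha> j)) = (\<Sum>j=i+1..N. sqrt (\<alpha> (l j)))" if "i \<le> N" for i
  proof -
    have "inj_on l {i+1..N}" using inj by (rule inj_on_subset) auto
    then show ?thesis using compl[OF that] by (simp add: sum.reindex)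
  qed
  define P where "P i \<longleftrightarrow> i \<in> {0..N-1} \<and>
          (real (N - i) + 2 * lam) * sqrt (\<alpha> (l (i+1))) > (\<Sum>j\<in>{1..N} - A i. sqrt (\<alpha> j))" for i
  have PN: "P (N-1)"
  proof -
    have "(\<Sum>j\<in>{1..N} - A (N-1). sqrt (\<alpha> j)) = sqrt (\<alpha> (l N))"
      using sumc[of "N-1"] assms(1) by simp
    moreover have "sqrt (\<alpha> (l N)) > 0" using assms(6) by simp
    ultimately show ?thesis unfolding P_def using assms(1,2) by simp
  qed
  have kP: "P k" unfolding k_def P_def[symmetric] by (rule LeastI[of P, OF PN])
  hence kN: "k \<le> N - 1" unfolding P_def by simp
  define S where "S = {1..N} - A k"
  define T where "T = (\<Sum>j\<in>S. sqrt (\<alpha> j))"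
  define c where "c = real (N - k) + 2 * lam"
  have cpos: "c > 0" unfolding c_def using assms(2) by simp
  have TS: "T = (\<Sum>j=k+1..N. sqrt (\<alpha> (l j)))" unfolding T_def S_def using sumc kN by simp
  have Sdesc: "S = l ` {k+1..N}" unfolding S_def using compl kN by simp
  have lNS: "l N \<in> S" using Sdesc assms(1) kN by auto
  have Sfin: "finite S" unfolding S_def by simp
  have Ssub: "S \<subseteq> {1..N}" unfolding S_def by auto
  have Tpos: "T > 0"
  proof -
    have "sqrt (\<alpha> (l N)) \<le> T" unfolding T_def
      by (rule member_le_sum[OF lNS]) (use assms(3) Ssub Sfin in auto)
    moreover have "sqrt (\<alpha> (l N)) > 0" using assms(6) by simp
    ultimately show ?thesis by linarith
  qed
  have cardS: "card S = N - k"
  proof -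
    have "inj_on l {k+1..N}" using inj by (rule inj_on_subset) auto
    then show ?thesis using Sdesc by (simp add: card_image)
  qed
  have condk: "c * sqrt (\<alpha> (l (k+1))) > T"
  proof -
    from kP have "(real (N - k) + 2 * lam) * sqrt (\<alpha> (l (k+1))) > (\<Sum>j\<in>{1..N} - A k. sqrt (\<alpha> j))"
      unfolding P_def by (elim conjE)
    thus ?thesis unfolding c_def T_def S_def .
  qed
  have Sbig: "c * sqrt (\<alpha> i) > T" if iS: "i \<in> S" for i
  proof -
    obtain j where j: "j \<in> {k+1..N}" "i = l j" using iS Sdesc by auto
    have "\<alpha> (l (k+1)) \<le> \<alpha> (l j)" using assms(5) j kN by auto
    hence "sqrt (\<alpha> (l (k+1))) \<le> sqrt (\<alpha> i)" using j by simp
    hence "c * sqrt (\<alpha> (l (k+1))) \<le> c * sqrt (\<alpha> i)" using cpos by simp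
    thus ?thesis using condk by simp
  qed
  define s where "s = T / c"
  define mu where "mu = s^2"
  have spos: "s > 0" unfolding s_def using Tpos cpos by simp
  have mupos: "mu > 0" unfolding mu_def using spos by simp
  have Asmall: "\<alpha> i \<le> mu" if iAk: "i \<in> A k" "i \<in> {1..N}" for i
  proof -
    have k1: "k \<ge> 1" using that A_def by (cases k) auto
    obtain j where j: "j \<in> {1..k}" "i = l j" using iAk A_def by auto
    have "\<alpha> (l j) \<le> \<alpha> (l k)" using assms(5) j kN by auto
    hence le1: "sqrt (\<alpha> i) \<le> sqrt (\<alpha> (l k))" using j by simp
    have kL: "k = (LEAST i. P i)" unfolding k_def P_def by (rule refl)
    have "k - 1 < k" using k1 by simp
    hence "\<not> P (k-1)" unfolding kL by (rule not_less_Least)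
    hence "\<not> (real (N - (k-1)) + 2 * lam) * sqrt (\<alpha> (l k)) > (\<Sum>j\<in>{1..N} - A (k-1). sqrt (\<alpha> j))"
      unfolding P_def using kN k1 by simp
    moreover have "(\<Sum>j\<in>{1..N} - A (k-1). sqrt (\<alpha> j)) = sqrt (\<alpha> (l k)) + T"
    proof -
      have "(\<Sum>j\<in>{1..N} - A (k-1). sqrt (\<alpha> j)) = (\<Sum>j=k..N. sqrt (\<alpha> (l j)))"
        using sumc[of "k-1"] kN k1 by simp
      also have "\<dots> = sqrt (\<alpha> (l k)) + (\<Sum>j=k+1..N. sqrt (\<alpha> (l j)))"
        using kN assms(1) by (subst sum.atLeast_Suc_atMost) auto
      finally show ?thesis using TS by simp
    qed
    moreover have "real (N - (k-1)) = real (N-k) + 1" using kN k1 assms(1) by auto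
    ultimately have "c * sqrt (\<alpha> (l k)) \<le> T" unfolding c_def by (simp add: algebra_simps)
    hence "sqrt (\<alpha> (l k)) \<le> s" unfolding s_def using cpos by (simp add: field_simps)
    hence "sqrt (\<alpha> i) \<le> s" by (rule order_trans[OF le1])
    moreover have "sqrt (\<alpha> i) \<ge> 0" using that assms(3) by simp
    ultimately have "sqrt (\<alpha> i)^2 \<le> s^2" by (rule power_mono)
    thus ?thesis unfolding mu_def using that assms(3) by simp
  qed
  have pbS: "pbar i = 1/(2*lam) * (c * sqrt (\<alpha> i) / T - 1)" if "i \<in> S" for i
    using that pbar_def unfolding S_def c_def T_def by simp
  have pbA: "pbar i = 0" if "i \<in> A k" for i using that pbar_def by simp
  have pbSpos: "pbar i > 0" if "i \<in> S" for i
  proof -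
    have "c * sqrt (\<alpha> i) / T > 1" using Sbig[OF that] Tpos by simp
    thus ?thesis using pbS[OF that] assms(2) by simp
  qed
  have alphaS: "\<alpha> i > 0" if "i \<in> S" for i
  proof -
    have "c * sqrt (\<alpha> i) > 0" using Sbig[OF that] Tpos by simp
    hence "sqrt (\<alpha> i) > 0" using cpos by (simp add: zero_less_mult_iff)
    thus ?thesis by simp
  qed
  have muS: "mu = \<alpha> i / (1 + 2*lam*pbar i)^2" if "i \<in> S" for i
  proof -
    have "1 + 2*lam*pbar i = c * sqrt (\<alpha> i) / T" using pbS[OF that] assms(2) by simp
    moreover have "sqrt (\<alpha> i)^2 = \<alpha> i" using alphaS[OF that] by simp
    ultimately have "(1 + 2*lam*pbar i)^2 = c^2 * \<alpha> i / T^2"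
      by (simp add: power_divide power_mult_distrib)
    moreover have "\<alpha> i / (c^2 * \<alpha> i / T^2) = T^2/c^2" using alphaS[OF that] cpos Tpos by (simp add: field_simps)
    ultimately show ?thesis unfolding mu_def s_def by (simp add: power_divide)
  qed
  have pb_nonneg: "pbar i \<ge> 0" if "i \<in> {1..N}" for i
    using pbSpos[of i] pbA[of i] that unfolding S_def by (cases "i \<in> A k") auto
  have sumS: "(\<Sum>i\<in>S. pbar i) = 1"
  proof -
    have "(\<Sum>i\<in>S. pbar i) = (\<Sum>i\<in>S. c/(2*lam*T) * sqrt (\<alpha> i) - 1/(2*lam))"
      using pbS assms(2) Tpos by (intro sum.cong) (auto simp: field_simps)
    also have "\<dots> = c/(2*lam*T) * T - real (card S) / (2*lam)"
      by (simp add: sum_subtractf sum_distrib_left T_def)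
    also have "\<dots> = 1" using cardS Tpos assms(2) unfolding c_def by (simp add: field_simps)
    finally show ?thesis .
  qed
  have sum1: "(\<Sum>i=1..N. pbar i) = 1"
  proof -
    have "(\<Sum>i=1..N. pbar i) = (\<Sum>i\<in>S. pbar i) + (\<Sum>i\<in>{1..N} - S. pbar i)"
      using Ssub by (metis finite_atLeastAtMost sum.subset_diff add.commute)
    moreover have "(\<Sum>i\<in>{1..N} - S. pbar i) = 0" using pbA unfolding S_def by (intro sum.neutral) auto
    ultimately show ?thesis using sumS by simp
  qed
  have pbar_simplex: "pbar \<in> simplex N" unfolding simplex_def using pb_nonneg sum1 by auto
  define g where "g p i = pbar i/(1+2*lam*pbar i)*\<alpha> i + mu*(p i - pbar i) - p i/(1+2*lam*p i)*\<alpha> i" for p i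
  have gprop: "g p i \<ge> 0 \<and> (g p i = 0 \<longrightarrow> p i = pbar i)" if "i \<in> {1..N}" "p i \<ge> 0" for p i
  proof (cases "i \<in> S")
    case True
    have y: "pbar i \<ge> 0" using pbSpos[OF True] by simp
    have eq: "g p i = 2*lam*\<alpha> i*(p i - pbar i)^2/((1+2*lam*p i)*(1+2*lam*pbar i)^2)"
      unfolding g_def muS[OF True] by (rule keyS[OF assms(2) that(2) y])
    have d1: "1+2*lam*p i > 0" using that assms(2) by (auto intro: add_pos_nonneg)
    have d2: "1+2*lam*pbar i > 0" using y assms(2) by (auto intro: add_pos_nonneg)
    have den: "(1+2*lam*p i)*(1+2*lam*pbar i)^2 > 0" using d1 d2 by simp
    have c0: "2*lam*\<alpha> i > 0" using alphaS[OF True] assms(2) by simp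
    have num: "2*lam*\<alpha> i*(p i - pbar i)^2 \<ge> 0" using c0 by simp
    have g1: "g p i \<ge> 0" unfolding eq using num den by (rule divide_nonneg_pos)
    have g2: "p i = pbar i" if z: "g p i = 0"
    proof -
      show ?thesis using z d1 d2 assms(2) alphaS[OF True] unfolding eq by auto
    qed
    show ?thesis using g1 g2 by blast
  next
    case False
    hence iA: "i \<in> A k" using that unfolding S_def by auto
    have eq: "g p i = mu * p i - p i/(1+2*lam*p i)*\<alpha> i" unfolding g_def pbA[OF iA] by simp
    have a0: "\<alpha> i \<ge> 0" using assms(3) that by auto
    note kA = keyA[OF assms(2) that(2) a0 Asmall[OF iA that(1)] mupos]
    have g1: "g p i \<ge> 0" unfolding eq by (rule kA(1))
    have g2: "p i = pbar i" if z: "g p i = 0"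
    proof -
      have "p i = 0" using z unfolding eq by (rule kA(2))
      thus ?thesis using pbA[OF iA] by simp
    qed
    show ?thesis using g1 g2 by blast
  qed
  have diff: "obj N lam \<alpha> pbar - obj N lam \<alpha> p = (\<Sum>i=1..N. g p i)" if "p \<in> simplex N" for p
  proof -
    have sp: "(\<Sum>i=1..N. p i) = 1" using that unfolding simplex_def by simp
    have "(\<Sum>i=1..N. g p i) = obj N lam \<alpha> pbar + mu * ((\<Sum>i=1..N. p i) - (\<Sum>i=1..N. pbar i)) - obj N lam \<alpha> p"
      unfolding g_def obj_def by (simp add: sum.distrib sum_subtractf sum_distrib_left algebra_simps)
    thus ?thesis using sp sum1 by simp
  qed
  have opt: "obj N lam \<alpha> p \<le> obj N lam \<alpha> pbar" if "p \<in> simplex N" for p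
  proof -
    have "(\<Sum>i=1..N. g p i) \<ge> 0" using gprop that unfolding simplex_def by (intro sum_nonneg) auto
    thus ?thesis using diff[OF that] by simp
  qed
  have uniq: "\<forall>i\<in>{1..N}. p i = pbar i" if "p \<in> simplex N" "obj N lam \<alpha> p = obj N lam \<alpha> pbar" for p
  proof
    fix i assume i: "i \<in> {1..N}"
    have pn: "\<forall>j\<in>{1..N}. p j \<ge> 0" using that unfolding simplex_def by simp
    have "(\<Sum>i=1..N. g p i) = 0" using diff[OF that(1)] that(2) by simp
    hence "\<forall>j\<in>{1..N}. g p j = 0" using gprop pn by (subst (asm) sum_nonneg_eq_0_iff) auto
    thus "p i = pbar i" using gprop[OF i] pn i by auto
  qed
  show ?thesis using pbar_simplex opt uniq by blast
qed

end
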